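(* Let $Z$ be a Hilbert space and $\alpha>0$. Then the interior of $\mathcal L_{\mathrm{sa},\alpha}(Z,Z^* )$, taken in the Banach space $\mathcal L_{\mathrm{sa}}(Z,Z^* )$ equipped with the operator norm, is $$\big(\mathcal L_{\mathrm{sa},\alpha}(Z,Z^* )\big)^\circ=\bigcup_{\epsilon>0}\mathcal L_{\mathrm{sa},\alpha+\epsilon}(Z,Z^* ).$$
   Context: For a Hilbert space $Z$, identify $Z^{**}$ with $Z$ and set $\mathcal L_{\mathrm{sa}}(Z,Z^* )=\{G\in\mathcal L(Z,Z^* ): G^*=G\}$; this is a closed subspace of $\mathcal L(Z,Z^* )$, hence a Banach space with the operator norm. For $\alpha>0$ let $\mathcal L_{\mathrm{sa},\alpha}(Z,Z^* )=\{G\in\mathcal L_{\mathrm{sa}}(Z,Z^* ): \langle Gz,z\rangle\ge\alpha\|z\|_Z^2 \text{ for all } z\in Z\}$, where $\langle\cdot,\cdot\rangle$ is the duality pairing between $Z^*$ and $Z$. *)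

theory Defs
  imports "HOL-Analysis.Analysis"
begin

(* Z* = bounded linear functionals 'a =>L real; L(Z,Z* ) = 'a =>L ('a =>L real)
  with the operator norm.  With Z** identified with Z, the adjoint G* satisfies
  (G* z) w = (G w) z, so G* = G means (G z) w = (G w) z for all z, w. *)

definition Lsa :: "('a::real_normed_vector \<Rightarrow>\<^sub>L ('a \<Rightarrow>\<^sub>L real)) set" where
  "Lsa = {G. \<forall>z w. blinfun_apply (blinfun_apply G z) w = blinfun_apply (blinfun_apply G w) z}"

definition Lsa_coercive :: "real \<Rightarrow> ('a::real_normed_vector \<Rightarrow>\<^sub>L ('a \<Rightarrow>\<^sub>L real)) set" where
  "Lsa_coercive \<alpha> = {G \<in> Lsa. \<forall>z. blinfun_apply (blinfun_apply G z) z \<ge> \<alpha> * (norm z)^2}"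

end

theory Submission
  imports Defs
begin

definition RJ :: "'a::real_inner \<Rightarrow>\<^sub>L ('a \<Rightarrow>\<^sub>L real)" where
  "RJ = Blinfun (\<lambda>z. blinfun_inner_left z)"

lemma RJ_bl: "bounded_linear (\<lambda>z::'a::real_inner. blinfun_inner_left z)"
proof (rule bounded_linear_intro[where K=1])
  fix x y :: 'a and r :: real
  show "blinfun_inner_left (x + y) = blinfun_inner_left x + blinfun_inner_left y"
    by (rule blinfun_eqI) (simp add: inner_add_right blinfun.add_left)
  show "blinfun_inner_left (r *\<^sub>R x) = r *\<^sub>R blinfun_inner_left x"
    by (rule blinfun_eqI) (simp add: blinfun.scaleR_left)
  show "norm (blinfun_inner_left x) \<le> norm x * 1"
    by (rule norm_blinfun_bound) (auto simp: Cauchy_Schwarz_ineq2 mult.commute)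
qed

lemma RJ_apply[simp]: "blinfun_apply (blinfun_apply RJ z) w = w \<bullet> z"
  unfolding RJ_def by (simp add: bounded_linear_Blinfun_apply[OF RJ_bl])

lemma RJ_norm: "norm (RJ :: 'a::real_inner \<Rightarrow>\<^sub>L ('a \<Rightarrow>\<^sub>L real)) \<le> 1"
proof (rule norm_blinfun_bound)
  fix x :: 'a
  show "norm (blinfun_apply RJ x) \<le> 1 * norm x"
    by (rule norm_blinfun_bound) (auto simp: Cauchy_Schwarz_ineq2 mult.commute)
qed simp

lemma RJ_Lsa: "RJ \<in> Lsa"
  by (simp add: Lsa_def inner_commute)

lemma diff_bound:
  fixes H G :: "'a::real_normed_vector \<Rightarrow>\<^sub>L ('a \<Rightarrow>\<^sub>L real)"
  shows "\<bar>blinfun_apply (blinfun_apply H z) z - blinfun_apply (blinfun_apply G z) z\<bar> \<le> norm (H - G) * (norm z)^2"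
proof -
  have "\<bar>blinfun_apply (blinfun_apply H z) z - blinfun_apply (blinfun_apply G z) z\<bar>
      = norm (blinfun_apply (blinfun_apply (H - G) z) z)"
    by (simp add: blinfun.diff_left)
  also have "\<dots> \<le> norm (blinfun_apply (H - G) z) * norm z" by (rule norm_blinfun)
  also have "\<dots> \<le> norm (H - G) * norm z * norm z"
    by (rule mult_right_mono[OF norm_blinfun]) simp
  finally show ?thesis by (simp add: power2_eq_square mult.assoc)
qed

lemma Lsa_diff: "G \<in> Lsa \<Longrightarrow> H \<in> Lsa \<Longrightarrow> G - c *\<^sub>R H \<in> Lsa"
  by (simp add: Lsa_def blinfun.diff_left blinfun.scaleR_left)

theorem lemma2p3:
  fixes \<alpha> :: real
  assumes "\<alpha> > 0"
  shows "(top_of_set (Lsa :: ('a::{real_inner,complete_space} \<Rightarrow>\<^sub>L ('a \<Rightarrow>\<^sub>L real)) set))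
           interior_of (Lsa_coercive \<alpha>)
         = (\<Union>\<epsilon>\<in>{\<epsilon>. \<epsilon> > 0}. Lsa_coercive (\<alpha> + \<epsilon>))"
proof (rule set_eqI, rule iffI)
  fix G :: "'a \<Rightarrow>\<^sub>L ('a \<Rightarrow>\<^sub>L real)"
  assume "G \<in> top_of_set Lsa interior_of Lsa_coercive \<alpha>"
  then obtain T where T: "openin (top_of_set Lsa) T" "G \<in> T" "T \<subseteq> Lsa_coercive \<alpha>"
    by (auto simp: interior_of_def)
  then obtain U where U: "open U" "T = Lsa \<inter> U" by (auto simp: openin_open)
  then obtain r where r: "r > 0" "ball G r \<subseteq> U" using T(2) open_contains_ball by blast
  have GL: "G \<in> Lsa" using T U by auto
  define H where "H = G - (r/2) *\<^sub>R RJ"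
  have "dist G H = norm ((r/2) *\<^sub>R (RJ :: 'a \<Rightarrow>\<^sub>L ('a \<Rightarrow>\<^sub>L real)))"
    by (simp add: H_def dist_norm)
  also have "\<dots> = r/2 * norm (RJ :: 'a \<Rightarrow>\<^sub>L ('a \<Rightarrow>\<^sub>L real))" using r by simp
  also have "\<dots> \<le> r/2" using RJ_norm[where 'a='a] r by (simp add: mult_left_le)
  also have "\<dots> < r" using r by simp
  finally have "H \<in> U" using r by auto
  moreover have "H \<in> Lsa" unfolding H_def by (rule Lsa_diff[OF GL RJ_Lsa])
  ultimately have "H \<in> Lsa_coercive \<alpha>" using T U by auto
  hence "\<forall>z. blinfun_apply (blinfun_apply G z) z \<ge> (\<alpha> + r/2) * (norm z)^2"
    by (auto simp: Lsa_coercive_def H_def blinfun.diff_left blinfun.scaleR_left power2_norm_eq_inner algebra_simps)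
  then show "G \<in> (\<Union>\<epsilon>\<in>{\<epsilon>. \<epsilon> > 0}. Lsa_coercive (\<alpha> + \<epsilon>))"
    using GL r by (auto simp: Lsa_coercive_def intro!: exI[of _ "r/2"])
next
  fix G :: "'a \<Rightarrow>\<^sub>L ('a \<Rightarrow>\<^sub>L real)"
  assume "G \<in> (\<Union>\<epsilon>\<in>{\<epsilon>. \<epsilon> > 0}. Lsa_coercive (\<alpha> + \<epsilon>))"
  then obtain e where e: "e > 0" "G \<in> Lsa_coercive (\<alpha> + e)" by auto
  have "Lsa \<inter> ball G e \<subseteq> Lsa_coercive \<alpha>"
  proof
    fix H assume H: "H \<in> Lsa \<inter> ball G e"
    have "\<alpha> * (norm z)^2 \<le> blinfun_apply (blinfun_apply H z) z" for z
    proof -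
      have d: "norm (H - G) < e" using H by (simp add: dist_norm norm_minus_commute)
      have "(\<alpha> + e) * (norm z)^2 \<le> blinfun_apply (blinfun_apply G z) z"
        using e by (auto simp: Lsa_coercive_def)
      moreover have "norm (H - G) * (norm z)^2 \<le> e * (norm z)^2"
        using d by (intro mult_right_mono) auto
      moreover note diff_bound[of H z G]
      ultimately show ?thesis by (simp add: algebra_simps abs_le_iff)
    qed
    then show "H \<in> Lsa_coercive \<alpha>" using H by (auto simp: Lsa_coercive_def)
  qed
  moreover have "openin (top_of_set Lsa) (Lsa \<inter> ball G e)"
    by (auto simp: openin_open)
  moreover have "G \<in> Lsa \<inter> ball G e" using e by (auto simp: Lsa_coercive_def)
  ultimately show "G \<in> top_of_set Lsa interior_of Lsa_coercive \<alpha>"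
    by (auto simp: interior_of_def)
qed

end
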